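(* Let $\mathcal{T}\in\mathbb{K}^{R\times R\times K}$ be slice mix invertible. Then for every nonzero $\boldsymbol{\lambda}\in\mathbb{K}^K$, $\mathrm{am}(\mathrm{span}(\boldsymbol{\lambda}))\geq\mathrm{gm}(\mathrm{span}(\boldsymbol{\lambda}))$. In particular, if $(\mathrm{span}(\boldsymbol{\lambda}),\mathbf{x})$ is a JGE pair of $\mathcal{T}$, then there is an integer $m>0$ with $p_{\mathcal{T}}(\boldsymbol{\gamma})=(\lambda_1\gamma_1+\cdots+\lambda_K\gamma_K)^m g(\boldsymbol{\gamma})$ for some nonzero polynomial $g$. Furthermore, if $\mathcal{T}$ has border $\mathbb{K}$-rank $R$, then $p_{\mathcal{T}}$ factors as a product of $R$ linear forms in $\boldsymbol{\gamma}$, so $\mathcal{T}$ has $R$ JGE values counting algebraic multiplicity.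
   Context: $\mathbb{K}$ denotes $\mathbb{R}$ or $\mathbb{C}$. For $\mathcal{T}\in\mathbb{K}^{R\times R\times K}$ with slices $\mathbf{T}_k=\mathcal{T}(:,:,k)$: slice mix invertible means some linear combination of the $\mathbf{T}_k$ is invertible. A nonzero $\mathbf{x}$ is a JGE vector if there are $\boldsymbol{\lambda}\in\mathbb{K}^K$ and nonzero $\mathbf{y}$ with $\mathbf{T}_\ell\mathbf{x}=\lambda_\ell\mathbf{y}$ for all $\ell$; $\mathrm{span}(\boldsymbol{\lambda})$ is a JGE value, $(\mathrm{span}(\boldsymbol{\lambda}),\mathbf{x})$ a JGE pair. $p_{\mathcal{T}}(\boldsymbol{\gamma})=\det(\sum_{k=1}^K\gamma_k\mathbf{T}_k)$. $\mathrm{am}(\mathrm{span}(\boldsymbol{\lambda}))$ is the largest $m$ such that $(\sum_k\lambda_k\gamma_k)^m$ divides $p_{\mathcal{T}}$; $\mathrm{gm}(\mathrm{span}(\boldsymbol{\lambda}))$ is the dimension of the span of all $\mathbf{x}$ with $(\mathrm{span}(\boldsymbol{\lambda}),\mathbf{x})$ a JGE pair. The border $\mathbb{K}$-rank of a tensor is the least $R$ such that it is a limit of tensors of $\mathbb{K}$-rank at most $R$ ($\mathbb{K}$-rank: least number of rank one tensors with $\mathbb{K}$-factors summing to it). *)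

theory Defs
  imports "HOL-Analysis.Analysis"
begin

text \<open>Tensors in K^(R x R x K) are represented as T :: 'a^'k^'r^'r with entry
  T(i,j,k) = T $ i $ j $ k; R = CARD('r), K = CARD('k).\<close>

definition slice :: "'a^'k^'r^'r \<Rightarrow> 'k \<Rightarrow> 'a^'r^'r" where
  "slice T k = (\<chi> i j. T $ i $ j $ k)"

definition slice_mix :: "'a::comm_ring_1^'k^'r^'r \<Rightarrow> 'a^'k \<Rightarrow> 'a^'r^'r" where
  "slice_mix T \<gamma> = (\<chi> i j. \<Sum>k\<in>UNIV. \<gamma> $ k * slice T k $ i $ j)"

text \<open>Polynomial functions K^K -> K (K infinite, so these are the polynomials).\<close>
inductive kpoly :: "('a::comm_ring_1^'k \<Rightarrow> 'a) \<Rightarrow> bool" where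
  kpoly_const: "kpoly (\<lambda>\<gamma>. c)"
| kpoly_var: "kpoly (\<lambda>\<gamma>. \<gamma> $ k)"
| kpoly_add: "kpoly f \<Longrightarrow> kpoly g \<Longrightarrow> kpoly (\<lambda>\<gamma>. f \<gamma> + g \<gamma>)"
| kpoly_mult: "kpoly f \<Longrightarrow> kpoly g \<Longrightarrow> kpoly (\<lambda>\<gamma>. f \<gamma> * g \<gamma>)"

definition slice_mix_invertible :: "'a::field^'k^'r^'r \<Rightarrow> bool" where
  "slice_mix_invertible T \<longleftrightarrow> (\<exists>\<gamma>. invertible (slice_mix T \<gamma>))"

definition pT :: "'a::field^'k^'r^'r \<Rightarrow> 'a^'k \<Rightarrow> 'a" where
  "pT T \<gamma> = det (slice_mix T \<gamma>)"

definition linform :: "'a::comm_ring_1^'k \<Rightarrow> 'a^'k \<Rightarrow> 'a" where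
  "linform lam \<gamma> = (\<Sum>k\<in>UNIV. lam $ k * \<gamma> $ k)"

definition jge_pair :: "'a::field^'k^'r^'r \<Rightarrow> 'a^'k \<Rightarrow> 'a^'r \<Rightarrow> bool" where
  "jge_pair T lam x \<longleftrightarrow> x \<noteq> 0 \<and> (\<exists>y. y \<noteq> 0 \<and> (\<forall>l. slice T l *v x = lam $ l *s y))"

definition jge_value :: "'a::field^'k^'r^'r \<Rightarrow> 'a^'k \<Rightarrow> bool" where
  "jge_value T lam \<longleftrightarrow> (\<exists>x. jge_pair T lam x)"

definition lin_pow_dvd :: "'a::field^'k \<Rightarrow> nat \<Rightarrow> ('a^'k \<Rightarrow> 'a) \<Rightarrow> bool" where
  "lin_pow_dvd lam m p \<longleftrightarrow> (\<exists>g. kpoly g \<and> (\<forall>\<gamma>. p \<gamma> = linform lam \<gamma> ^ m * g \<gamma>))"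

definition am :: "'a::field^'k^'r^'r \<Rightarrow> 'a^'k \<Rightarrow> nat" where
  "am T lam = (GREATEST m. lin_pow_dvd lam m (pT T))"

definition gm :: "'a::field^'k^'r^'r \<Rightarrow> 'a^'k \<Rightarrow> nat" where
  "gm T lam = vec.dim {x. jge_pair T lam x}"

definition rank1 :: "'a::comm_ring_1^'r \<Rightarrow> 'a^'r \<Rightarrow> 'a^'k \<Rightarrow> 'a^'k^'r^'r" where
  "rank1 a b c = (\<chi> i j k. a $ i * b $ j * c $ k)"

definition tensor_rank :: "'a::comm_ring_1^'k^'r^'r \<Rightarrow> nat" where
  "tensor_rank T = (LEAST n. \<exists>a b c. T = (\<Sum>s<n. rank1 (a s) (b s) (c s)))"

definition border_rank :: "'a::real_normed_field^'k^'r^'r \<Rightarrow> nat" where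
  "border_rank T = (LEAST n. \<exists>S :: nat \<Rightarrow> 'a^'k^'r^'r.
      (\<forall>t. tensor_rank (S t) \<le> n) \<and> S \<longlonglongrightarrow> T)"

end

theory Submission
  imports Defs "HOL-Computational_Algebra.Fundamental_Theorem_Algebra"
begin


definition ev :: "real poly \<Rightarrow> 'a::real_normed_field \<Rightarrow> 'a" where
  "ev p x = poly (map_poly of_real p) x"

lemma map_poly_of_real_mult:
  "map_poly (of_real::real\<Rightarrow>'a::real_normed_field) (p*q) = map_poly of_real p * map_poly of_real q"
  by (intro poly_eqI) (simp add: coeff_map_poly coeff_mult of_real_sum)

lemma map_poly_of_real_add:
  "map_poly (of_real::real\<Rightarrow>'a::real_normed_field) (p+q) = map_poly of_real p + map_poly of_real q"
  by (intro poly_eqI) (simp add: coeff_map_poly)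

lemma ev_mult: "ev (p*q) x = ev p x * ev q x"
  by (simp add: ev_def map_poly_of_real_mult)

lemma ev_add: "ev (p+q) x = ev p x + ev q x"
  by (simp add: ev_def map_poly_of_real_add)

lemma ev_one: "ev 1 x = 1" by (simp add: ev_def)
lemma ev_zero: "ev 0 x = 0" by (simp add: ev_def)

lemma ev_power: "ev (p^n) x = ev p x ^ n"
  by (induction n) (simp_all add: ev_mult ev_one)

lemma ev_pCons: "ev (pCons a p) x = of_real a + x * ev p x"
  by (simp add: ev_def map_poly_pCons)

lemma ev_const: "ev [:c:] x = of_real c"
  by (simp add: ev_def map_poly_pCons)

lemma poly_of_real_real: "poly (map_poly of_real p) (of_real r :: 'a::real_normed_field) = of_real (poly p r)"
  by (induction p) (auto simp: map_poly_pCons)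

definition qd :: "real \<Rightarrow> real \<Rightarrow> real poly" where
  "qd a c = [:c, -2*a, 1:]"

lemma ev_qd: "ev (qd a c) x = x*x - of_real (2*a) * x + of_real c"
  by (simp add: qd_def ev_pCons ev_zero algebra_simps)

lemma degree_qd [simp]: "degree (qd a c) = 2" and lc_qd [simp]: "lead_coeff (qd a c) = 1"
  by (auto simp: qd_def numeral_2_eq_2)

lemma coeff_qd2 [simp]: "coeff (qd a c) 2 = 1"
  by (simp add: qd_def numeral_2_eq_2)

lemma poly_qd_nonneg: "a^2 \<le> c \<Longrightarrow> poly (qd a c) t \<ge> 0"
proof -
  assume "a^2 \<le> c"
  have "poly (qd a c) t = (t-a)^2 + (c - a^2)" by (simp add: qd_def algebra_simps power2_eq_square)
  then show ?thesis using \<open>a^2 \<le> c\<close> zero_le_power2[of "t-a"] by linarith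
qed

lemma LB:
  fixes x :: "'a::real_normed_field"
  assumes m0: "m \<ge> 0" and mmin: "\<And>a c. a^2 \<le> c \<Longrightarrow> m \<le> norm (ev (qd a c) x)"
  shows "p \<noteq> 0 \<Longrightarrow> (\<forall>t. poly p t \<noteq> 0) \<Longrightarrow> norm (ev p x) \<ge> \<bar>lead_coeff p\<bar> * m ^ (degree p div 2)"
proof (induction "degree p" arbitrary: p rule: less_induct)
  case less
  show ?case
  proof (cases "degree p = 0")
    case True
    then obtain c where p: "p = [:c:]" by (meson degree_eq_zeroE)
    then show ?thesis by (simp add: ev_const)
  next
    case False
    define pc where "pc = map_poly complex_of_real p"
    have "degree pc = degree p" unfolding pc_def by (rule degree_map_poly) auto
    then have "\<not> constant (poly pc)" using False constant_degree by metis
    then obtain w where w: "poly pc w = 0" using fundamental_theorem_of_algebra by blast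
    have imw: "Im w \<noteq> 0"
    proof
      assume "Im w = 0"
      then have "w = of_real (Re w)" by (simp add: complex_eq_iff)
      then have "complex_of_real (poly p (Re w)) = 0" using w poly_of_real_real[of p "Re w"] unfolding pc_def by metis
      then have "poly p (Re w) = 0" by simp
      then show False using less.prems by blast
    qed
    define a where "a = Re w"
    define c where "c = (cmod w)^2"
    define q where "q = qd a c"
    have ac: "a^2 \<le> c" unfolding a_def c_def using abs_Re_le_cmod[of w]
      by (metis abs_ge_zero power2_abs power_mono)
    have q0: "q \<noteq> 0" using degree_qd[of a c] unfolding q_def by (metis degree_0 zero_neq_numeral)
    have qw: "poly (map_poly complex_of_real q) w = 0"
    proof -
      obtain u v where wuv: "w = Complex u v" by (metis complex.collapse)
      have cm: "cmod (Complex u v) * cmod (Complex u v) = u * u + v * v"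
        by (metis cmod_power2 complex.sel power2_eq_square)
      have "poly (map_poly complex_of_real q) w = w*w - of_real (2*a) * w + of_real c"
        using ev_qd[of a c w] unfolding q_def ev_def by simp
      also have "\<dots> = 0" unfolding a_def c_def wuv
        by (simp add: complex_eq_iff cm power2_eq_square algebra_simps)
      finally show ?thesis .
    qed
    define r where "r = p mod q"
    define s where "s = p div q"
    have pqr: "p = q * s + r" unfolding r_def s_def by simp
    have r0: "r = 0"
    proof (rule ccontr)
      assume rn: "r \<noteq> 0"
      have "degree r < 2" using degree_mod_less[OF q0, of p] rn unfolding r_def q_def by simp
      then have rr: "r = [:coeff r 0, coeff r 1:]"
        by (intro poly_eqI) (auto simp: coeff_pCons coeff_eq_0 split: nat.splits)
      have "poly (map_poly complex_of_real p) w = poly (map_poly complex_of_real q) w * poly (map_poly complex_of_real s) w + poly (map_poly complex_of_real r) w"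
        by (subst pqr) (simp add: map_poly_of_real_mult map_poly_of_real_add)
      then have "poly (map_poly complex_of_real r) w = 0" using w qw unfolding pc_def by simp
      then have "of_real (coeff r 0) + of_real (coeff r 1) * w = 0"
        by (subst (asm) rr) (simp add: map_poly_pCons mult.commute)
      then have "coeff r 1 * Im w = 0" and "coeff r 0 + coeff r 1 * Re w = 0"
        by (simp_all add: complex_eq_iff)
      then have "coeff r 1 = 0" "coeff r 0 = 0" using imw by auto
      then have "r = 0" using rr by simp
      then show False using rn by simp
    qed
    have ps: "p = q * s" using pqr r0 by simp
    have s0: "s \<noteq> 0" using ps less.prems by auto
    have degp: "degree p = 2 + degree s" using ps degree_mult_eq[OF q0 s0] q_def by simp
    have lcp: "lead_coeff p = lead_coeff s" by (metis lc_qd lead_coeff_mult mult_1 q_def ps)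
    have sroot: "\<forall>t. poly s t \<noteq> 0" using less.prems ps by auto
    have IH: "norm (ev s x) \<ge> \<bar>lead_coeff s\<bar> * m ^ (degree s div 2)"
      using less.hyps[of s] degp s0 sroot by simp
    have "norm (ev p x) = norm (ev q x) * norm (ev s x)" using ps by (simp add: ev_mult norm_mult)
    also have "\<dots> \<ge> m * (\<bar>lead_coeff s\<bar> * m ^ (degree s div 2))"
      using mmin[OF ac] IH m0 unfolding q_def by (simp add: mult_mono)
    finally show ?thesis using degp lcp by (simp add: algebra_simps)
  qed
qed

lemma ostrowski_step:
  fixes x :: "'a::real_normed_field"
  assumes m0: "m > 0" and mmin: "\<And>a c. a^2 \<le> c \<Longrightarrow> m \<le> norm (ev (qd a c) x)"
    and a0c0: "a0^2 \<le> c0" and Qm: "norm (ev (qd a0 c0) x) = m" and e: "e = m/2"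
  shows "norm (ev (qd a0 (c0 + e)) x) \<le> m + e * (1/4)^k"
proof -
  define n where "n = 2*k+1"
  have oddn: "odd n" and n1: "n \<ge> 1" unfolding n_def by auto
  define q where "q = qd a0 c0"
  define E where "E = [:e:]"
  define h where "h = (\<Sum>i<n. (-E) ^ (n - Suc i) * q ^ i)"
  define P where "P = q^n + E^n"
  have e0: "e > 0" using e m0 by simp
  have ident: "P = (q + E) * h"
    using power_diff_sumr2[of q n "-E"] power_minus_odd[OF oddn, of E] unfolding P_def h_def by simp
  have qE: "q + E = qd a0 (c0 + e)" unfolding q_def E_def qd_def by simp
  have polyP: "poly P t > 0" for t
  proof -
    have "poly q t \<ge> 0" unfolding q_def by (rule poly_qd_nonneg[OF a0c0])
    then show ?thesis unfolding P_def E_def using e0 by (simp add: add_nonneg_pos)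
  qed
  have h0: "h \<noteq> 0" using polyP[of 0] ident by auto
  have hroot: "\<forall>t. poly h t \<noteq> 0" using polyP ident by (metis less_irrefl mult_zero_right poly_mult)
  have q0: "q \<noteq> 0" unfolding q_def by (metis degree_0 degree_qd zero_neq_numeral)
  have dq: "degree (q^n) = 2*n" unfolding q_def using degree_power_eq[OF q0[unfolded q_def], of n] by simp
  have dE: "degree (E^n) = 0" unfolding E_def using degree_power_le[of "[:e:]" n] by simp
  have degP: "degree P = 2*n" unfolding P_def using dq dE n1 by (subst degree_add_eq_left) auto
  have lcP: "lead_coeff P = 1"
  proof -
    have c0: "coeff (E^n) (2*n) = 0" using dE n1 by (intro coeff_eq_0) auto
    have "lead_coeff P = coeff (q^n) (2*n) + coeff (E^n) (2*n)" using degP unfolding P_def by simp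
    then have "lead_coeff P = lead_coeff (q^n)" using c0 dq by simp
    also have "\<dots> = 1" unfolding q_def lead_coeff_power by simp
    finally show ?thesis .
  qed
  have qE0: "q + E \<noteq> 0" unfolding qE by (metis degree_0 degree_qd zero_neq_numeral)
  have degh: "degree h = 4*k" using degP ident degree_mult_eq[OF qE0 h0] unfolding qE n_def by simp
  have lch: "lead_coeff h = 1" using lcP ident lead_coeff_mult[of "q+E" h] unfolding qE by simp
  have hb: "norm (ev h x) \<ge> m^(2*k)"
    using LB[of m x h] m0 mmin h0 hroot degh lch by simp
  define F1 where "F1 = norm (ev (qd a0 (c0 + e)) x)"
  have "ev P x = ev q x ^ n + of_real e ^ n" unfolding P_def E_def by (simp add: ev_add ev_power ev_const)
  then have nP: "norm (ev P x) \<le> m^n + e^n" using Qm unfolding q_def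
    by (metis abs_of_pos e0 norm_of_real norm_power norm_triangle_ineq)
  have eP: "norm (ev P x) = F1 * norm (ev h x)" unfolding F1_def ident qE by (simp add: ev_mult norm_mult)
  have F10: "F1 \<ge> 0" unfolding F1_def by simp
  have "F1 * m^(2*k) \<le> F1 * norm (ev h x)" using mult_left_mono[OF hb F10] .
  then have "F1 * m^(2*k) \<le> m^n + e^n" using eP nP by linarith
  then have "F1 * m^(2*k) \<le> m * m^(2*k) + e * (e^(2*k))" unfolding n_def by simp
  moreover have "e^(2*k) = m^(2*k) * (1/4)^k"
  proof -
    have p4: "(2::real)^(2*k) = 4^k" by (simp add: power_mult)
    have "e^(2*k) = m^(2*k) / 2^(2*k)" unfolding e by (simp add: power_divide)
    also have "\<dots> = m^(2*k) * (1/4)^k" using p4 by (simp add: power_divide)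
    finally show ?thesis .
  qed
  ultimately have "F1 * m^(2*k) \<le> (m + e * (1/4)^k) * m^(2*k)" by (simp add: algebra_simps)
  then show ?thesis unfolding F1_def using m0 by simp
qed

lemma ostrowski:
  fixes x :: "'a::real_normed_field"
  shows "\<exists>a c. a^2 \<le> c \<and> ev (qd a c) x = 0"
proof -
  define N where "N = norm x"
  define f where "f = (\<lambda>p::real\<times>real. norm (x*x - of_real (2 * fst p) * x + of_real (snd p)))"
  have f_ev: "norm (ev (qd a c) x) = f (a,c)" for a c by (simp add: f_def ev_qd)
  define C0 where "C0 = 8*N^2 + 1"
  have C0pos: "C0 > 0" unfolding C0_def by (simp add: add_nonneg_pos)
  have f00: "f (0,0) = N^2" by (simp add: f_def N_def norm_mult power2_eq_square)
  have coer: "f (a,c) > N^2" if ac: "a^2 \<le> c" "c > C0" for a c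
  proof -
    have c0: "c \<ge> 0" using ac C0pos by simp
    define Y where "Y = x*x - of_real (2 * a) * x + of_real c"
    have Yf: "norm Y = f (a,c)" unfolding Y_def f_def by simp
    have "(of_real c :: 'a) = Y - x*x + of_real (2*a) * x" unfolding Y_def by simp
    then have "norm (of_real c :: 'a) \<le> norm (Y - x*x) + norm (of_real (2*a) * x)"
      using norm_triangle_ineq by metis
    also have "\<dots> \<le> norm Y + norm (x*x) + norm (of_real (2*a) * x)"
      using norm_triangle_ineq4[of Y "x*x"] by simp
    finally have "norm (of_real c :: 'a) \<le> f (a,c) + norm (x*x) + norm (of_real (2*a) * x)" using Yf by simp
    then have i1: "c \<le> f (a,c) + N^2 + 2*\<bar>a\<bar>*N" using c0 by (simp add: N_def norm_mult power2_eq_square)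
    have "0 \<le> (\<bar>a\<bar> - 2*N)^2" by simp
    then have "2*\<bar>a\<bar>*N \<le> a^2/2 + 2*N^2" by (simp add: power2_eq_square algebra_simps)
    then show ?thesis using i1 ac unfolding C0_def by linarith
  qed
  have contf: "continuous_on UNIV f" unfolding f_def by (intro continuous_intros)
  define K where "K = {p::real\<times>real. (fst p)^2 \<le> snd p \<and> snd p \<le> C0}"
  have closedK: "closed K" unfolding K_def
    by (intro closed_Collect_conj closed_Collect_le continuous_intros)
  have boundedK: "bounded K"
  proof -
    have "norm p \<le> 2*C0 + 1" if "p \<in> K" for p
    proof -
      obtain a c where p: "p = (a,c)" by fastforce
      have ac: "a^2 \<le> c" "c \<le> C0" using that p K_def by auto
      have "\<bar>a\<bar> \<le> C0 + 1"
      proof (rule ccontr)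
        assume "\<not> \<bar>a\<bar> \<le> C0 + 1"
        then have "\<bar>a\<bar> > 1" "\<bar>a\<bar> > C0" using C0pos by auto
        then have "\<bar>a\<bar> * \<bar>a\<bar> > \<bar>a\<bar> * 1" by (intro mult_strict_left_mono) auto
        then have "a^2 > C0" using \<open>\<bar>a\<bar> > C0\<close> by (simp add: power2_eq_square abs_mult_self_eq)
        then show False using ac by simp
      qed
      moreover have "\<bar>c\<bar> \<le> C0" using ac zero_le_power2[of a] by linarith
      moreover have "norm p \<le> \<bar>a\<bar> + \<bar>c\<bar>" unfolding p using norm_Pair_le[of a c] by simp
      ultimately show ?thesis by simp
    qed
    then show ?thesis unfolding bounded_iff by blast
  qed
  have compK: "compact K" using closedK boundedK by (simp add: compact_eq_bounded_closed)
  have K00: "(0,0) \<in> K" unfolding K_def using C0pos by simp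
  obtain p0 where p0: "p0 \<in> K" "\<forall>y\<in>K. f p0 \<le> f y"
    using continuous_attains_inf[OF compK _ continuous_on_subset[OF contf]] K00 by blast
  define m where "m = f p0"
  have mmin: "m \<le> norm (ev (qd a c) x)" if "a^2 \<le> c" for a c
  proof (cases "c \<le> C0")
    case True then show ?thesis using p0 that unfolding m_def f_ev K_def by auto
  next
    case False then show ?thesis using coer[OF that] p0(2) K00 f00 unfolding m_def f_ev by force
  qed
  have m0: "m \<ge> 0" unfolding m_def f_def by simp
  define S where "S = K \<inter> {p. f p = m}"
  have closedS: "closed {p. f p = m}" by (intro closed_Collect_eq contf continuous_intros)
  have compS: "compact S" unfolding S_def by (rule compact_Int_closed[OF compK closedS])
  have S0: "S \<noteq> {}" using p0 unfolding S_def m_def by auto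
  obtain p1 where p1: "p1 \<in> S" "\<forall>y\<in>S. snd y \<le> snd p1"
    using continuous_attains_sup[OF compS S0 continuous_on_snd[OF continuous_on_id]] by auto
  define a0 c0 where "a0 = fst p1" and "c0 = snd p1"
  have p1eq: "p1 = (a0, c0)" unfolding a0_def c0_def by simp
  have a0c0: "a0^2 \<le> c0" and fp1: "f (a0,c0) = m" and c0C: "c0 \<le> C0"
    using p1(1) unfolding S_def K_def p1eq by auto
  have "m = 0"
  proof (rule ccontr)
    assume "m \<noteq> 0"
    then have mpos: "m > 0" using m0 by simp
    define e where "e = m/2"
    have epos: "e > 0" using mpos e_def by simp
    define F1 where "F1 = f (a0, c0 + e)"
    have stepk: "F1 \<le> m + e * (1/4)^k" for k
      using ostrowski_step[OF mpos mmin a0c0 _ e_def, of k] fp1 unfolding F1_def f_ev by simp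
    have F1ge: "F1 \<ge> m" using mmin[of a0 "c0+e"] a0c0 epos unfolding F1_def f_ev by simp
    have F1m: "F1 = m"
    proof (rule ccontr)
      assume "F1 \<noteq> m"
      then have "(F1 - m)/e > 0" using F1ge epos by simp
      then obtain k where "(1/4::real)^k < (F1 - m)/e" using real_arch_pow_inv[of "(F1 - m)/e" "1/4"] by auto
      then have "e * (1/4)^k < F1 - m" using epos by (simp add: field_simps)
      then show False using stepk[of k] by simp
    qed
    have "c0 + e \<le> C0"
    proof (rule ccontr)
      assume "\<not> c0 + e \<le> C0"
      then have "F1 > N^2" unfolding F1_def using coer[of a0 "c0+e"] a0c0 epos by simp
      moreover have "N^2 \<ge> m" using p0(2) K00 f00 unfolding m_def by force
      ultimately show False using F1m by simp
    qed
    then have "(a0, c0+e) \<in> S" unfolding S_def K_def using F1m a0c0 epos unfolding F1_def by simp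
    then have "c0 + e \<le> c0" using p1(2) p1eq by force
    then show False using epos by simp
  qed
  then have "ev (qd a0 c0) x = 0" using fp1 f_ev[of a0 c0] by simp
  then show ?thesis using a0c0 by blast
qed


lemma sq_form:
  fixes x :: "'a::real_normed_field"
  shows "\<exists>a d. d \<ge> 0 \<and> (x - of_real a) * (x - of_real a) = - of_real d"
proof -
  obtain a c where ac: "a^2 \<le> c" "ev (qd a c) x = 0" using ostrowski by blast
  then have "x*x - of_real (2*a) * x + of_real c = 0" by (simp add: ev_qd)
  then have "(x - of_real a) * (x - of_real a) = - of_real (c - a^2)"
    by (simp add: algebra_simps power2_eq_square)
  then show ?thesis using ac by (intro exI[of _ a] exI[of _ "c - a^2"]) auto
qed

lemma norm_j: "(j::'a::real_normed_field) * j = -1 \<Longrightarrow> norm j = 1"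
proof -
  assume "j * j = -1"
  then have n1: "norm j * norm j = 1" using norm_mult[of j j] by simp
  have "(norm j - 1) * (norm j + 1) = 0" using n1 by (simp add: algebra_simps)
  moreover have "norm j + 1 > 0" by (simp add: add_nonneg_pos)
  ultimately show ?thesis by simp
qed

lemma norm_bound_j:
  fixes j :: "'a::real_normed_field"
  assumes j: "j * j = -1"
  shows "\<bar>a\<bar> + \<bar>b\<bar> \<le> 2 * norm (of_real a + of_real b * j)"
proof -
  define P where "P = norm (of_real a + of_real b * j :: 'a)"
  define Q where "Q = norm (of_real a - of_real b * j :: 'a)"
  have "(of_real a + of_real b * j) * (of_real a - of_real b * j) = (of_real (a^2 + b^2) :: 'a)"
  proof -
    have "(of_real a + of_real b * j) * (of_real a - of_real b * j) = of_real a * of_real a - of_real b * of_real b * (j * j :: 'a)"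
      by (simp add: algebra_simps)
    also have "\<dots> = of_real (a^2 + b^2)" using j by (simp add: power2_eq_square)
    finally show ?thesis .
  qed
  then have "P * Q = norm (of_real (a^2 + b^2) :: 'a)" unfolding P_def Q_def by (metis norm_mult)
  moreover have "norm (of_real (a^2 + b^2) :: 'a) = a^2 + b^2" by (simp only: norm_of_real) simp
  ultimately have PQ: "P * Q = a^2 + b^2" by simp
  have "Q \<le> norm (of_real a :: 'a) + norm (of_real b * j)" unfolding Q_def by (rule norm_triangle_ineq4)
  then have Qle: "Q \<le> \<bar>a\<bar> + \<bar>b\<bar>" using norm_j[OF j] by (simp add: norm_mult)
  have P0: "P \<ge> 0" "Q \<ge> 0" unfolding P_def Q_def by auto
  have sq: "(\<bar>a\<bar> + \<bar>b\<bar>)^2 \<le> 2 * (a^2 + b^2)"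
    using zero_le_power2[of "\<bar>a\<bar> - \<bar>b\<bar>"] by (simp add: power2_eq_square algebra_simps)
  have "P * (\<bar>a\<bar> + \<bar>b\<bar>) \<ge> P * Q" using Qle P0 by (simp add: mult_left_mono)
  then have "2 * P * (\<bar>a\<bar> + \<bar>b\<bar>) \<ge> (\<bar>a\<bar> + \<bar>b\<bar>) * (\<bar>a\<bar> + \<bar>b\<bar>)"
    using PQ sq by (simp add: power2_eq_square)
  then have key: "(2 * P) * (\<bar>a\<bar> + \<bar>b\<bar>) \<ge> (\<bar>a\<bar> + \<bar>b\<bar>) * (\<bar>a\<bar> + \<bar>b\<bar>)" by simp
  have "\<bar>a\<bar> + \<bar>b\<bar> \<le> 2 * P"
  proof (cases "\<bar>a\<bar> + \<bar>b\<bar> = 0")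
    case True then show ?thesis using P0 by simp
  next
    case False then have "\<bar>a\<bar> + \<bar>b\<bar> > 0" by simp
    then show ?thesis using key mult_le_cancel_right_pos by blast
  qed
  then show ?thesis unfolding P_def .
qed

lemma structure_rnf:
  "\<exists>j::'a::real_normed_field. \<forall>x. \<exists>a b. x = of_real a + of_real b * j \<and> \<bar>a\<bar> + \<bar>b\<bar> \<le> 2 * norm x"
proof (cases "\<exists>j::'a. j * j = -1")
  case True
  then obtain j :: 'a where j: "j * j = -1" by blast
  have repr: "\<exists>a b. x = of_real a + of_real b * j" for x
  proof -
    obtain a d where ad: "d \<ge> 0" "(x - of_real a) * (x - of_real a) = - of_real d" using sq_form by blast
    show ?thesis
    proof (cases "d = 0")
      case True
      then have "x = of_real a" using ad by simp
      then show ?thesis by (intro exI[of _ a] exI[of _ 0]) simp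
    next
      case False
      then have dp: "d > 0" using ad by simp
      define k where "k = (x - of_real a) / of_real (sqrt d)"
      have sd: "(of_real (sqrt d) :: 'a) * of_real (sqrt d) = of_real d"
        using dp by (simp flip: of_real_mult)
      have sd0: "(of_real (sqrt d) :: 'a) \<noteq> 0" using dp by simp
      have "k * k = ((x - of_real a) * (x - of_real a)) / (of_real (sqrt d) * of_real (sqrt d))"
        unfolding k_def by (simp add: times_divide_times_eq)
      also have "\<dots> = -1" using ad sd dp by simp
      finally have kk: "k * k = -1" .
      have "(k - j) * (k + j) = 0" using kk j by (simp add: algebra_simps)
      then have kj: "k = j \<or> k = -j" by (simp add: eq_neg_iff_add_eq_0)
      have "x = of_real a + of_real (sqrt d) * k" unfolding k_def using sd0 by simp
      from kj show ?thesis
      proof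
        assume "k = j" then show ?thesis using \<open>x = _\<close> by blast
      next
        assume "k = -j" then have "x = of_real a + of_real (- sqrt d) * j" using \<open>x = _\<close> by simp
        then show ?thesis by blast
      qed
    qed
  qed
  have "\<exists>a b. x = of_real a + of_real b * j \<and> \<bar>a\<bar> + \<bar>b\<bar> \<le> 2 * norm x" for x
  proof -
    obtain a b where "x = of_real a + of_real b * j" using repr by blast
    then show ?thesis using norm_bound_j[OF j, of a b] by blast
  qed
  then show ?thesis by blast
next
  case False
  have "\<exists>a b. x = of_real a + of_real b * 0 \<and> \<bar>a\<bar> + \<bar>b\<bar> \<le> 2 * norm x" for x :: 'a
  proof -
    obtain a d where ad: "d \<ge> 0" "(x - of_real a) * (x - of_real a) = - of_real d" using sq_form by blast
    have "d = 0"
    proof (rule ccontr)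
      assume "d \<noteq> 0"
      then have dp: "d > 0" using ad by simp
      define k where "k = (x - of_real a) / of_real (sqrt d)"
      have sd: "(of_real (sqrt d) :: 'a) * of_real (sqrt d) = of_real d"
        using dp by (simp flip: of_real_mult)
      have sd0: "(of_real (sqrt d) :: 'a) \<noteq> 0" using dp by simp
      have "k * k = ((x - of_real a) * (x - of_real a)) / (of_real (sqrt d) * of_real (sqrt d))"
        unfolding k_def by (simp add: times_divide_times_eq)
      also have "\<dots> = -1" using ad sd dp by simp
      finally have kk: "k * k = -1" .
      then show False using False by blast
    qed
    then have "x = of_real a" using ad by simp
    then show ?thesis by (intro exI[of _ a] exI[of _ 0]) simp
  qed
  then show ?thesis by blast
qed

lemma norm_le_l1_gen: "norm (x::'b::real_normed_vector^'n) \<le> (\<Sum>i\<in>UNIV. norm (x $ i))"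
  by (simp add: norm_vec_def L2_set_le_sum)

lemma BW:
  fixes X :: "nat \<Rightarrow> 'a::real_normed_field^'m^'n"
  assumes B: "\<And>t. norm (X t) \<le> B"
  shows "\<exists>r L. strict_mono r \<and> (X \<circ> r) \<longlonglongrightarrow> L"
proof -
  obtain j :: 'a where j: "\<forall>x. \<exists>a b. x = of_real a + of_real b * j \<and> \<bar>a\<bar> + \<bar>b\<bar> \<le> 2 * norm x"
    using structure_rnf by blast
  define P where "P x p \<longleftrightarrow> x = of_real (fst p) + of_real (snd p) * j \<and> \<bar>fst p\<bar> + \<bar>snd p\<bar> \<le> 2 * norm x"
    for x and p :: "real \<times> real"
  define ab where "ab x = (SOME p. P x p)" for x
  have abp: "P x (ab x)" for x
  proof -
    obtain a b where "x = of_real a + of_real b * j \<and> \<bar>a\<bar> + \<bar>b\<bar> \<le> 2 * norm x" using j by blast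
    then have "P x (a,b)" unfolding P_def fst_conv snd_conv by blast
    then show ?thesis unfolding ab_def by (rule someI)
  qed
  define dec where "dec p = of_real (fst p) + of_real (snd p) * j" for p :: "real\<times>real"
  have decab: "dec (ab x) = x" for x using abp[of x] unfolding P_def dec_def by simp
  have normab: "norm (ab x) \<le> 2 * norm x" for x
  proof -
    have "norm (ab x) \<le> norm (fst (ab x)) + norm (snd (ab x))"
      using norm_Pair_le[of "fst (ab x)" "snd (ab x)"] by simp
    then show ?thesis using abp[of x] unfolding P_def by simp
  qed
  define Y where "Y t = (\<chi> i l. ab (X t $ i $ l))" for t
  have bdY: "norm (Y t) \<le> (\<Sum>i\<in>(UNIV::'n set). \<Sum>l\<in>(UNIV::'m set). 2*B)" for t
  proof -
    have "norm (Y t) \<le> (\<Sum>i\<in>UNIV. norm (Y t $ i))" by (rule norm_le_l1_gen)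
    also have "\<dots> \<le> (\<Sum>i\<in>UNIV. \<Sum>l\<in>UNIV. norm (Y t $ i $ l))"
      by (intro sum_mono norm_le_l1_gen)
    also have "\<dots> \<le> (\<Sum>i\<in>(UNIV::'n set). \<Sum>l\<in>(UNIV::'m set). 2*B)"
    proof (intro sum_mono)
      fix i l
      have "norm (Y t $ i $ l) \<le> 2 * norm (X t $ i $ l)" unfolding Y_def using normab by simp
      also have "\<dots> \<le> 2 * B"
      proof -
        have "norm (X t $ i $ l) \<le> norm (X t $ i)" "norm (X t $ i) \<le> norm (X t)"
          by (rule Finite_Cartesian_Product.norm_nth_le)+
        then show ?thesis using B[of t] by simp
      qed
      finally show "norm (Y t $ i $ l) \<le> 2 * B" .
    qed
    finally show ?thesis .
  qed
  then have "bounded (range Y)" unfolding bounded_iff by blast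
  then obtain r L where r: "strict_mono r" and L: "(Y \<circ> r) \<longlonglongrightarrow> L"
    using bounded_imp_convergent_subsequence by blast
  have XY: "X t = (\<chi> i l. dec (Y t $ i $ l))" for t unfolding Y_def by (simp add: decab vec_eq_iff)
  have "(\<lambda>t. (\<chi> i l. dec (Y (r t) $ i $ l))) \<longlonglongrightarrow> (\<chi> i l. dec (L $ i $ l))"
    unfolding dec_def using L unfolding o_def
    by (intro tendsto_vec_lambda tendsto_intros)
  then have "(X \<circ> r) \<longlonglongrightarrow> (\<chi> i l. dec (L $ i $ l))" unfolding o_def using XY by simp
  then show ?thesis using r by blast
qed


lemma slice_mix_entry [simp]: "slice_mix T \<gamma> $ i $ j = (\<Sum>k\<in>UNIV. \<gamma> $ k * T $ i $ j $ k)"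
  by (simp add: slice_mix_def slice_def)

lemma slice_entry [simp]: "slice T k $ i $ j = T $ i $ j $ k"
  by (simp add: slice_def)

lemma slice_mix_mulv: "(slice_mix T \<gamma> *v x) $ i = (\<Sum>k\<in>UNIV. \<gamma> $ k * ((slice T k *v x) $ i))"
  unfolding matrix_vector_mult_def
  by (simp add: sum_distrib_left sum_distrib_right algebra_simps) (rule sum.swap)

lemma jge_mix:
  assumes "\<And>l. slice T l *v x = lam $ l *s y"
  shows "slice_mix T \<gamma> *v x = linform lam \<gamma> *s y"
proof -
  have "(slice_mix T \<gamma> *v x) $ i = (linform lam \<gamma> *s y) $ i" for i
    unfolding slice_mix_mulv assms linform_def by (simp add: sum_distrib_left mult_ac)
  then show ?thesis by (simp add: vec_eq_iff)
qed

lemma kpoly_sum: "finite S \<Longrightarrow> (\<And>s. s \<in> S \<Longrightarrow> kpoly (f s)) \<Longrightarrow> kpoly (\<lambda>\<gamma>. \<Sum>s\<in>S. f s \<gamma>)"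
proof (induction S rule: finite_induct)
  case empty then show ?case using kpoly_const[of 0] by simp
next
  case (insert x F) then show ?case by (simp add: kpoly_add)
qed

lemma kpoly_prod: "finite S \<Longrightarrow> (\<And>s. s \<in> S \<Longrightarrow> kpoly (f s)) \<Longrightarrow> kpoly (\<lambda>\<gamma>. \<Prod>s\<in>S. f s \<gamma>)"
proof (induction S rule: finite_induct)
  case empty then show ?case using kpoly_const[of 1] by simp
next
  case (insert x F) then show ?case by (simp add: kpoly_mult)
qed

lemma kpoly_det:
  fixes A :: "'a::comm_ring_1^'k \<Rightarrow> 'a^'n^'n"
  assumes "\<And>i j. kpoly (\<lambda>\<gamma>. A \<gamma> $ i $ j)"
  shows "kpoly (\<lambda>\<gamma>. det (A \<gamma>))"
  unfolding det_def
  by (intro kpoly_sum kpoly_mult kpoly_const kpoly_prod assms) auto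

lemma kpoly_slice_mix: "kpoly (\<lambda>\<gamma>. slice_mix T \<gamma> $ i $ j)"
  by (simp only: slice_mix_entry) (intro kpoly_sum kpoly_mult kpoly_var kpoly_const, auto)

lemma kpoly_pT: "kpoly (pT T)"
  unfolding pT_def[abs_def] by (rule kpoly_det[OF kpoly_slice_mix])

lemma det_scale_cols:
  fixes N :: "'a::comm_ring_1^'n^'n"
  shows "det (\<chi> i s. D s * N $ i $ s) = prod D UNIV * det N"
proof -
  have tr: "transpose (\<chi> i s. D s * N $ i $ s) = (\<chi> s. D s *s (\<chi> i. N $ i $ s))"
    by (simp add: transpose_def vec_eq_iff)
  have "det (\<chi> i s. D s * N $ i $ s) = det (transpose (\<chi> i s. D s * N $ i $ s))"
    by (simp only: det_transpose)
  also have "\<dots> = det (\<chi> s. D s *s (\<chi> i. N $ i $ s))" by (simp only: tr)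
  also have "\<dots> = prod D UNIV * det (\<chi> s. (\<chi> i. N $ i $ s))" by (rule det_rows_mul)
  also have "(\<chi> s. (\<chi> i. N $ i $ s)) = transpose N" by (simp add: transpose_def)
  finally show ?thesis by (simp add: det_transpose)
qed

lemma lin_pow_dvd_jge:
  fixes T :: "'a::field^'k^'r^'r"
  assumes BJ: "B \<subseteq> {x. jge_pair T lam x}" and indB: "vec.independent B"
  shows "lin_pow_dvd lam (card B) (pT T)"
proof -
  define E where "E = vec.extend_basis B"
  have BE: "B \<subseteq> E" and indE: "vec.independent E" and spE: "vec.span E = UNIV"
    using vec.extend_basis_superset[OF indB] vec.independent_extend_basis[OF indB]
      vec.span_extend_basis[OF indB] unfolding E_def by auto
  have finE: "finite E" using vec.finiteI_independent[OF indE] .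
  have cardE: "card E = CARD('r)"
    using vec.basis_card_eq_dim[of E UNIV] spE indE vec_dim_card by auto
  obtain f where f: "bij_betw f (UNIV::'r set) E"
    using finite_same_card_bij[of "UNIV::'r set" E] finE cardE by auto
  define I where "I = {s. f s \<in> B}"
  have cardI: "card I = card B"
  proof -
    have fI: "f ` I = B" using f BE unfolding I_def bij_betw_def by auto
    have iI: "inj_on f I" using f unfolding bij_betw_def by (auto intro: inj_on_subset)
    show ?thesis using card_image[OF iI] fI by simp
  qed
  define P :: "'a^'r^'r" where "P = (\<chi> i s. f s $ i)"
  have Pinv: "det P \<noteq> 0"
  proof -
    have "\<exists>B'. B' ** P = mat 1"
      unfolding matrix_left_invertible_independent_columns
    proof (rule allI, rule impI)
      fix c assume c: "(\<Sum>i\<in>UNIV. c i *s column i P) = 0"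
      have col: "column i P = f i" for i by (simp add: column_def P_def vec_eq_iff)
      define c' where "c' v = c (inv_into UNIV f v)" for v
      have injf: "inj f" using f unfolding bij_betw_def by simp
      have cc: "c' (f i) = c i" for i unfolding c'_def using injf by simp
      have "(\<Sum>v\<in>E. c' v *s v) = (\<Sum>i\<in>UNIV. c' (f i) *s f i)"
        using sum.reindex_bij_betw[OF f, of "\<lambda>v. c' v *s v"] by simp
      also have "\<dots> = 0" using c by (simp add: cc col)
      finally have "\<forall>v\<in>E. c' v = 0" using indE unfolding vec.independent_explicit by blast
      then show "\<forall>i. c i = 0" using f cc unfolding bij_betw_def by auto
    qed
    then show ?thesis using invertible_left_inverse invertible_det_nz by metis
  qed
  have Yex: "\<forall>s\<in>I. \<exists>y. (\<forall>l. slice T l *v f s = lam $ l *s y)"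
    using BJ unfolding I_def jge_pair_def by auto
  then obtain Y where Y: "\<And>s l. s \<in> I \<Longrightarrow> slice T l *v f s = lam $ l *s Y s"
    by metis
  define N where "N \<gamma> = (\<chi> i s. if s \<in> I then Y s $ i else (slice_mix T \<gamma> *v f s) $ i)" for \<gamma>
  define D where "D \<gamma> s = (if s \<in> I then linform lam \<gamma> else 1)" for \<gamma> s
  have MP: "slice_mix T \<gamma> ** P = (\<chi> i s. D \<gamma> s * N \<gamma> $ i $ s)" for \<gamma>
  proof -
    have 1: "(slice_mix T \<gamma> ** P) $ i $ s = (slice_mix T \<gamma> *v f s) $ i" for i s
      by (simp add: matrix_matrix_mult_def matrix_vector_mult_def P_def)
    have 2: "s \<in> I \<Longrightarrow> slice_mix T \<gamma> *v f s = linform lam \<gamma> *s Y s" for s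
      using jge_mix Y by blast
    show ?thesis using 1 2 by (simp add: vec_eq_iff D_def N_def)
  qed
  have prodD: "prod (D \<gamma>) UNIV = linform lam \<gamma> ^ card I" for \<gamma>
    unfolding D_def by (simp add: prod.If_cases)
  have key: "pT T \<gamma> * det P = linform lam \<gamma> ^ card B * det (N \<gamma>)" for \<gamma>
    using MP[of \<gamma>] det_mul[of "slice_mix T \<gamma>" P] det_scale_cols[of "D \<gamma>" "N \<gamma>"] prodD cardI
    unfolding pT_def by simp
  define g where "g \<gamma> = det (N \<gamma>) * inverse (det P)" for \<gamma>
  have kN: "kpoly (\<lambda>\<gamma>. N \<gamma> $ i $ s)" for i s
  proof (cases "s \<in> I")
    case True then show ?thesis unfolding N_def by (simp add: kpoly_const)
  next
    case False
    then have "(\<lambda>\<gamma>. N \<gamma> $ i $ s) = (\<lambda>\<gamma>. \<Sum>j\<in>UNIV. slice_mix T \<gamma> $ i $ j * f s $ j)"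
      unfolding N_def by (simp add: matrix_vector_mult_def)
    then show ?thesis by (simp only:) (intro kpoly_sum kpoly_mult kpoly_slice_mix kpoly_const, auto)
  qed
  have kg: "kpoly g"
    unfolding g_def by (intro kpoly_mult kpoly_det kN kpoly_const)
  have "pT T \<gamma> = linform lam \<gamma> ^ card B * g \<gamma>" for \<gamma>
    using key[of \<gamma>] Pinv unfolding g_def by (simp add: field_simps)
  then show ?thesis unfolding lin_pow_dvd_def using kg by blast
qed

lemma kpoly_line:
  fixes \<gamma>0 u :: "'a::comm_ring_1^'k"
  shows "kpoly f \<Longrightarrow> \<exists>G. \<forall>t. f (\<gamma>0 + t *s u) = poly G t"
proof (induction rule: kpoly.induct)
  case (kpoly_const c) then show ?case by (intro exI[of _ "[:c:]"]) simp
next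
  case (kpoly_var k) then show ?case by (intro exI[of _ "[:\<gamma>0 $ k, u $ k:]"]) (simp add: algebra_simps)
next
  case (kpoly_add f g)
  then obtain F G where "\<forall>t. f (\<gamma>0 + t *s u) = poly F t" "\<forall>t. g (\<gamma>0 + t *s u) = poly G t" by blast
  then show ?case by (intro exI[of _ "F + G"]) simp
next
  case (kpoly_mult f g)
  then obtain F G where "\<forall>t. f (\<gamma>0 + t *s u) = poly F t" "\<forall>t. g (\<gamma>0 + t *s u) = poly G t" by blast
  then show ?case by (intro exI[of _ "F * G"]) simp
qed

lemma det_line:
  fixes A B :: "'a::comm_ring_1^'n^'n"
  shows "\<exists>D. degree D \<le> CARD('n) \<and> (\<forall>t. det (\<chi> i j. A$i$j + t * B$i$j) = poly D t)"
proof -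
  define D where "D = (\<Sum>p\<in>{p. p permutes (UNIV::'n set)}. smult (of_int (sign p)) (\<Prod>i\<in>UNIV. [:A$i$(p i), B$i$(p i):]))"
  have "det (\<chi> i j. A$i$j + t * B$i$j) = poly D t" for t
    unfolding D_def det_def by (simp add: poly_sum poly_prod algebra_simps)
  moreover have "degree D \<le> CARD('n)"
    unfolding D_def
  proof (rule degree_sum_le)
    fix p
    have deg1: "degree [:a, b:] \<le> 1" for a b :: 'a
      using degree_pCons_le[of a "[:b:]"] by simp
    have "degree (\<Prod>i\<in>UNIV. [:A$i$(p i), B$i$(p i):]) \<le> (\<Sum>i\<in>(UNIV::'n set). (degree \<circ> (\<lambda>i. [:A$i$(p i), B$i$(p i):])) i)"
      by (rule degree_prod_sum_le) simp
    also have "\<dots> \<le> (\<Sum>i\<in>(UNIV::'n set). 1)"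
      by (rule sum_mono) (simp only: o_def deg1)
    finally have "degree (\<Prod>i\<in>UNIV. [:A$i$(p i), B$i$(p i):]) \<le> (\<Sum>i\<in>(UNIV::'n set). 1)" .
    then show "degree (smult (of_int (sign p)) (\<Prod>i\<in>UNIV. [:A$i$(p i), B$i$(p i):])) \<le> CARD('n)"
      using degree_smult_le order_trans by fastforce
  qed simp
  ultimately show ?thesis by blast
qed

lemma am_bound:
  fixes T :: "'a::field_char_0^'k^'r^'r"
  assumes inv: "det (slice_mix T \<gamma>0) \<noteq> 0" and lam0: "lam \<noteq> 0"
    and dv: "lin_pow_dvd lam m (pT T)"
  shows "m \<le> CARD('r)"
proof -
  obtain g where kg: "kpoly g" and pg: "\<And>\<gamma>. pT T \<gamma> = linform lam \<gamma> ^ m * g \<gamma>"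
    using dv unfolding lin_pow_dvd_def by blast
  obtain k0 where k0: "lam $ k0 \<noteq> 0" using lam0 by (metis vec_eq_iff zero_index)
  define u :: "'a^'k" where "u = axis k0 1"
  obtain G where G: "\<And>t. g (\<gamma>0 + t *s u) = poly G t" using kpoly_line[OF kg] by blast
  obtain D where dD: "degree D \<le> CARD('r)"
    and D: "\<And>t. det (\<chi> i j. slice_mix T \<gamma>0 $i$j + t * slice_mix T u $i$j) = poly D t"
    using det_line by blast
  have smline: "slice_mix T (\<gamma>0 + t *s u) = (\<chi> i j. slice_mix T \<gamma>0 $i$j + t * slice_mix T u $i$j)" for t
    by (simp add: vec_eq_iff algebra_simps sum.distrib sum_distrib_left)
  have lin: "linform lam (\<gamma>0 + t *s u) = poly [:linform lam \<gamma>0, lam $ k0:] t" for t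
  proof -
    have "linform lam (\<gamma>0 + t *s u) = linform lam \<gamma>0 + t * (\<Sum>k\<in>UNIV. lam $ k * u $ k)"
      unfolding linform_def by (simp add: algebra_simps sum.distrib sum_distrib_left)
    also have "(\<Sum>k\<in>UNIV. lam $ k * u $ k) = lam $ k0" unfolding u_def axis_def
      by (simp add: if_distrib cong: if_cong)
    finally show ?thesis by (simp add: algebra_simps)
  qed
  have "poly D t = poly ([:linform lam \<gamma>0, lam $ k0:] ^ m * G) t" for t
    using pg[of "\<gamma>0 + t *s u"] D[of t] smline[of t] lin[of t] G[of t] unfolding pT_def by simp
  then have DG: "D = [:linform lam \<gamma>0, lam $ k0:] ^ m * G" using poly_eq_poly_eq_iff by blast
  have D0: "D \<noteq> 0"
  proof
    assume "D = 0"
    then have "poly D 0 = 0" by simp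
    moreover have "(\<chi> i j. slice_mix T \<gamma>0 $i$j + 0 * slice_mix T u $i$j) = slice_mix T \<gamma>0"
      by (simp del: slice_mix_entry)
    ultimately show False using D[of 0] inv by (simp del: slice_mix_entry)
  qed
  have G0: "G \<noteq> 0" using D0 DG by auto
  have l0: "[:linform lam \<gamma>0, lam $ k0:] \<noteq> 0" using k0 by simp
  have "degree D = m + degree G"
    using DG degree_mult_eq[OF _ G0, of "[:linform lam \<gamma>0, lam $ k0:] ^ m"] l0 k0
    by (simp add: degree_power_eq)
  then show ?thesis using dD by simp
qed

lemma part12:
  fixes T :: "'a::field_char_0^'k^'r^'r"
  assumes smi: "slice_mix_invertible T"
  shows "(\<forall>lam::'a^'k. lam \<noteq> 0 \<longrightarrow> am T lam \<ge> gm T lam)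
    \<and> (\<forall>lam x. jge_pair T lam x \<longrightarrow>
          (\<exists>m::nat. m > 0 \<and> (\<exists>g. kpoly g \<and> g \<noteq> (\<lambda>_. 0) \<and>
              (\<forall>\<gamma>. pT T \<gamma> = linform lam \<gamma> ^ m * g \<gamma>))))"
proof
  obtain \<gamma>0 where g0: "det (slice_mix T \<gamma>0) \<noteq> 0"
    using smi unfolding slice_mix_invertible_def invertible_det_nz by blast
  show "\<forall>lam::'a^'k. lam \<noteq> 0 \<longrightarrow> am T lam \<ge> gm T lam"
  proof (intro allI impI)
    fix lam :: "'a^'k" assume lam0: "lam \<noteq> 0"
    obtain B where B: "B \<subseteq> {x. jge_pair T lam x}" "vec.independent B"
      "card B = vec.dim {x. jge_pair T lam x}"
      using vec.basis_exists[of "{x. jge_pair T lam x}"] by metis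
    have "lin_pow_dvd lam (card B) (pT T)" by (rule lin_pow_dvd_jge[OF B(1,2)])
    then have "card B \<le> am T lam" unfolding am_def
      by (rule Greatest_le_nat) (rule am_bound[OF g0 lam0])
    then show "am T lam \<ge> gm T lam" unfolding gm_def B(3) .
  qed
  show "\<forall>lam x. jge_pair T lam x \<longrightarrow>
          (\<exists>m::nat. m > 0 \<and> (\<exists>g. kpoly g \<and> g \<noteq> (\<lambda>_. 0) \<and>
              (\<forall>\<gamma>. pT T \<gamma> = linform lam \<gamma> ^ m * g \<gamma>)))"
  proof (intro allI impI)
    fix lam x assume jx: "jge_pair T lam x"
    then have x0: "x \<noteq> 0" unfolding jge_pair_def by simp
    have "lin_pow_dvd lam (card {x}) (pT T)"
      by (rule lin_pow_dvd_jge) (use jx x0 in auto)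
    then obtain g where kg: "kpoly g" and pg: "\<And>\<gamma>. pT T \<gamma> = linform lam \<gamma> ^ 1 * g \<gamma>"
      unfolding lin_pow_dvd_def by auto
    have "g \<noteq> (\<lambda>_. 0)"
    proof
      assume "g = (\<lambda>_. 0)"
      then have "pT T \<gamma>0 = 0" using pg by simp
      then show False using g0 unfolding pT_def by simp
    qed
    then show "\<exists>m::nat. m > 0 \<and> (\<exists>g. kpoly g \<and> g \<noteq> (\<lambda>_. 0) \<and>
              (\<forall>\<gamma>. pT T \<gamma> = linform lam \<gamma> ^ m * g \<gamma>))"
      using kg pg by (intro exI[of _ 1]) auto
  qed
qed


lemma rank1_entry [simp]: "rank1 a b c $ i $ j $ k = a $ i * b $ j * c $ k"
  by (simp add: rank1_def)

lemma sum_entry3: "(\<Sum>s\<in>S. X s) $ i $ j $ k = (\<Sum>s\<in>S. X s $ i $ j $ k)"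
  by (simp add: sum_component)

lemma decomp_exists:
  fixes T :: "'a::comm_ring_1^'k^'r^'r"
  shows "\<exists>n::nat. \<exists>a b c. T = (\<Sum>s<n. rank1 (a s) (b s) (c s))"
proof -
  define U where "U = (UNIV :: ('r \<times> 'r \<times> 'k) set)"
  obtain h where h: "bij_betw h {0..<card U} U" using ex_bij_betw_nat_finite[of U] unfolding U_def by auto
  define a where "a s = (axis (fst (h s)) 1 :: 'a^'r)" for s
  define b where "b s = (axis (fst (snd (h s))) 1 :: 'a^'r)" for s
  define c where "c s = (T $ fst (h s) $ fst (snd (h s)) $ snd (snd (h s))) *s (axis (snd (snd (h s))) 1 :: 'a^'k)" for s
  have "(\<Sum>s<card U. rank1 (a s) (b s) (c s)) $ i $ j $ k = T $ i $ j $ k" for i j k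
  proof -
    define F where "F p = (if p = (i,j,k) then T $ i $ j $ k else 0)" for p
    have "(\<Sum>s<card U. rank1 (a s) (b s) (c s)) $ i $ j $ k = (\<Sum>s\<in>{0..<card U}. F (h s))"
      unfolding sum_entry3 lessThan_atLeast0[symmetric]
      by (intro sum.cong refl) (auto simp: a_def b_def c_def F_def axis_def prod_eq_iff)
    also have "\<dots> = (\<Sum>p\<in>U. F p)" by (rule sum.reindex_bij_betw[OF h])
    also have "\<dots> = T $ i $ j $ k" unfolding F_def U_def by simp
    finally show ?thesis .
  qed
  then have "T = (\<Sum>s<card U. rank1 (a s) (b s) (c s))" by (simp add: vec_eq_iff)
  then show ?thesis by (intro exI[of _ "card U"] exI[of _ a] exI[of _ b] exI[of _ c])
qed

lemma repr_r:
  fixes S :: "'a::comm_ring_1^'k^'r^'r"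
  assumes "tensor_rank S \<le> CARD('r)"
  shows "\<exists>a b c. S = (\<Sum>\<sigma>\<in>(UNIV::'r set). rank1 (a \<sigma>) (b \<sigma>) (c \<sigma>))"
proof -
  define R where "R = CARD('r)"
  define n0 where "n0 = tensor_rank S"
  obtain a b c where abc: "S = (\<Sum>s<n0. rank1 (a s) (b s) (c s))"
    using LeastI_ex[OF decomp_exists[of S]] unfolding tensor_rank_def n0_def by blast
  define a' where "a' s = (if s < n0 then a s else 0)" for s
  have r0: "rank1 0 b' c' = (0::'a^'k^'r^'r)" for b' c' by (simp add: vec_eq_iff)
  have "(\<Sum>s<R. rank1 (a' s) (b s) (c s)) = (\<Sum>s<n0. rank1 (a' s) (b s) (c s))"
  proof (rule sum.mono_neutral_right)
    show "\<forall>s\<in>{..<R} - {..<n0}. rank1 (a' s) (b s) (c s) = 0"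
      using r0 unfolding a'_def by auto
  qed (use assms R_def n0_def in auto)
  also have "\<dots> = S" unfolding abc a'_def by simp
  finally have S1: "S = (\<Sum>s\<in>{0..<R}. rank1 (a' s) (b s) (c s))" by (simp add: lessThan_atLeast0)
  obtain h where h: "bij_betw h {0..<R} (UNIV::'r set)"
    using ex_bij_betw_nat_finite[of "UNIV::'r set"] unfolding R_def by auto
  have "S = (\<Sum>\<sigma>\<in>(UNIV::'r set). rank1 (a' (inv_into {0..<R} h \<sigma>)) (b (inv_into {0..<R} h \<sigma>)) (c (inv_into {0..<R} h \<sigma>)))"
    unfolding S1 using sum.reindex_bij_betw[OF bij_betw_inv_into[OF h], of "\<lambda>s. rank1 (a' s) (b s) (c s)"]
    by simp
  then show ?thesis
    by (intro exI[of _ "\<lambda>\<sigma>. a' (inv_into {0..<R} h \<sigma>)"] exI[of _ "\<lambda>\<sigma>. b (inv_into {0..<R} h \<sigma>)"]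
        exI[of _ "\<lambda>\<sigma>. c (inv_into {0..<R} h \<sigma>)"])
qed


lemma slice_repr:
  assumes S: "S = (\<Sum>\<sigma>\<in>UNIV. rank1 (a \<sigma>) (b \<sigma>) (c \<sigma>))"
  shows "slice S l = (\<chi> i \<sigma>. a \<sigma> $ i * c \<sigma> $ l) ** (\<chi> \<sigma> j. b \<sigma> $ j)"
  unfolding S by (simp add: vec_eq_iff matrix_matrix_mult_def sum_entry3 algebra_simps)

lemma mix_repr:
  assumes S: "S = (\<Sum>\<sigma>\<in>UNIV. rank1 (a \<sigma>) (b \<sigma>) (c \<sigma>))"
  shows "slice_mix S \<gamma> = (\<chi> i \<sigma>. linform (c \<sigma>) \<gamma> * (\<chi> i \<sigma>. a \<sigma> $ i) $ i $ \<sigma>) ** (\<chi> \<sigma> j. b \<sigma> $ j)"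
proof -
  have "slice_mix S \<gamma> $ i $ j = ((\<chi> i \<sigma>. linform (c \<sigma>) \<gamma> * (\<chi> i \<sigma>. a \<sigma> $ i) $ i $ \<sigma>) ** (\<chi> \<sigma> j. b \<sigma> $ j)) $ i $ j" for i j
  proof -
    have "slice_mix S \<gamma> $ i $ j = (\<Sum>k\<in>UNIV. \<Sum>\<sigma>\<in>UNIV. \<gamma> $ k * (a \<sigma> $ i * b \<sigma> $ j * c \<sigma> $ k))"
      unfolding S by (simp add: sum_entry3 sum_distrib_left)
    also have "\<dots> = (\<Sum>\<sigma>\<in>UNIV. \<Sum>k\<in>UNIV. \<gamma> $ k * (a \<sigma> $ i * b \<sigma> $ j * c \<sigma> $ k))"
      by (rule sum.swap)
    also have "\<dots> = (\<Sum>\<sigma>\<in>UNIV. linform (c \<sigma>) \<gamma> * a \<sigma> $ i * b \<sigma> $ j)"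
      unfolding linform_def by (intro sum.cong refl) (simp add: sum_distrib_left sum_distrib_right mult_ac)
    finally show ?thesis by (simp add: matrix_matrix_mult_def)
  qed
  then show ?thesis by (simp add: vec_eq_iff)
qed

lemma det_repr:
  fixes S :: "'a::comm_ring_1^'k^'r^'r"
  assumes S: "S = (\<Sum>\<sigma>\<in>UNIV. rank1 (a \<sigma>) (b \<sigma>) (c \<sigma>))"
  shows "det (slice_mix S \<gamma>) = (\<Prod>\<sigma>\<in>UNIV. linform (c \<sigma>) \<gamma>) * det (\<chi> i \<sigma>. a \<sigma> $ i) * det (\<chi> \<sigma> j. b \<sigma> $ j)"
  unfolding mix_repr[OF S] det_mul det_scale_cols by simp

definition ob :: "'a::real_normed_vector^'n^'m \<Rightarrow> real" where
  "ob A = (\<Sum>i\<in>UNIV. \<Sum>j\<in>UNIV. norm (A $ i $ j))"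

lemma norm_mulv_le:
  fixes A :: "'a::real_normed_field^'n^'m"
  shows "norm (A *v x) \<le> ob A * norm x"
proof -
  have "norm (A *v x) \<le> (\<Sum>i\<in>UNIV. norm ((A *v x) $ i))" by (rule norm_le_l1_gen)
  also have "\<dots> \<le> (\<Sum>i\<in>UNIV. \<Sum>j\<in>UNIV. norm (A $ i $ j) * norm x)"
  proof (rule sum_mono)
    fix i
    have "norm ((A *v x) $ i) \<le> (\<Sum>j\<in>UNIV. norm (A $ i $ j * x $ j))"
      unfolding matrix_vector_mult_def by (simp add: norm_sum)
    also have "\<dots> \<le> (\<Sum>j\<in>UNIV. norm (A $ i $ j) * norm x)"
      by (intro sum_mono) (simp add: norm_mult mult_left_mono Finite_Cartesian_Product.norm_nth_le)
    finally show "norm ((A *v x) $ i) \<le> (\<Sum>j\<in>UNIV. norm (A $ i $ j) * norm x)" .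
  qed
  also have "\<dots> = ob A * norm x" unfolding ob_def by (simp add: sum_distrib_right)
  finally show ?thesis .
qed

lemma tendsto_ob:
  fixes X :: "'b \<Rightarrow> 'a::real_normed_vector^'n^'m"
  assumes "(X \<longlongrightarrow> A) F"
  shows "((\<lambda>t. ob (X t - A)) \<longlongrightarrow> 0) F"
proof -
  have "((\<lambda>t. \<Sum>i\<in>UNIV. \<Sum>j\<in>UNIV. norm ((X t - A) $ i $ j)) \<longlongrightarrow> (\<Sum>i\<in>(UNIV::'m set). \<Sum>j\<in>(UNIV::'n set). norm ((A - A) $ i $ j))) F"
    by (intro tendsto_intros assms tendsto_vec_nth)
  then show ?thesis unfolding ob_def by simp
qed

lemma tendsto_det:
  fixes X :: "'b \<Rightarrow> 'a::real_normed_field^'n^'n"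
  assumes "(X \<longlongrightarrow> A) F"
  shows "((\<lambda>t. det (X t)) \<longlongrightarrow> det A) F"
  unfolding det_def by (intro tendsto_intros tendsto_vec_nth assms)

lemma tendsto_slice_mix:
  fixes S :: "'b \<Rightarrow> 'a::real_normed_field^'k^'r^'r"
  assumes "(S \<longlongrightarrow> T) F"
  shows "((\<lambda>t. slice_mix (S t) \<gamma>) \<longlongrightarrow> slice_mix T \<gamma>) F"
  unfolding slice_mix_def slice_def by (intro tendsto_vec_lambda tendsto_intros tendsto_vec_nth assms)

lemma tendsto_slice:
  fixes S :: "'b \<Rightarrow> 'a::real_normed_field^'k^'r^'r"
  assumes "(S \<longlongrightarrow> T) F"
  shows "((\<lambda>t. slice (S t) l) \<longlongrightarrow> slice T l) F"
  unfolding slice_def by (intro tendsto_vec_lambda tendsto_intros tendsto_vec_nth assms)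

lemma tendsto_mulv:
  fixes X :: "'b \<Rightarrow> 'a::real_normed_field^'n^'m"
  assumes "(X \<longlongrightarrow> A) F" "(Y \<longlongrightarrow> y) F"
  shows "((\<lambda>t. X t *v Y t) \<longlongrightarrow> A *v y) F"
  unfolding matrix_vector_mult_def by (intro tendsto_vec_lambda tendsto_intros tendsto_vec_nth assms)

lemma tendsto_smult_vec:
  fixes Y :: "'b \<Rightarrow> 'a::real_normed_field^'n"
  assumes "(f \<longlongrightarrow> c) F" "(Y \<longlongrightarrow> y) F"
  shows "((\<lambda>t. f t *s Y t) \<longlongrightarrow> c *s y) F"
proof -
  have "((\<lambda>t. \<chi> i. f t * Y t $ i) \<longlongrightarrow> (\<chi> i. c * y $ i)) F"
    by (intro tendsto_vec_lambda tendsto_intros tendsto_vec_nth assms)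
  moreover have "(\<lambda>t. f t *s Y t) = (\<lambda>t. \<chi> i. f t * Y t $ i)" "c *s y = (\<chi> i. c * y $ i)"
    by (auto simp: vec_eq_iff)
  ultimately show ?thesis by simp
qed

lemma tendsto_linform:
  fixes Y :: "'b \<Rightarrow> 'a::real_normed_field^'k"
  assumes "(Y \<longlongrightarrow> c) F"
  shows "((\<lambda>t. linform (Y t) \<gamma>) \<longlongrightarrow> linform c \<gamma>) F"
  unfolding linform_def by (intro tendsto_intros tendsto_vec_nth assms)


lemma norm_smult_vec:
  fixes x :: "'a::real_normed_field^'n"
  shows "norm (k *s x) = norm k * norm x"
proof -
  have "norm (k *s x) = sqrt (\<Sum>i\<in>UNIV. (norm k * norm (x $ i))^2)"
    unfolding norm_vec_def L2_set_def by (simp add: norm_mult)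
  also have "\<dots> = sqrt ((norm k)^2 * (\<Sum>i\<in>UNIV. (norm (x $ i))^2))"
    by (simp add: power_mult_distrib sum_distrib_left)
  also have "\<dots> = norm k * norm x"
    unfolding norm_vec_def L2_set_def by (simp add: real_sqrt_mult)
  finally show ?thesis .
qed

lemma linform_smult: "linform (k *s c) \<gamma> = k * linform c \<gamma>"
  unfolding linform_def by (simp add: sum_distrib_left mult.assoc)

lemma mulv_axis: "(A::'a::comm_ring_1^'n^'m) *v axis s 1 = (\<chi> i. A $ i $ s)"
  by (simp add: vec_eq_iff matrix_vector_mult_def axis_def if_distrib cong: if_cong)

lemma finite_step:
  fixes S :: "'a::real_normed_field^'k^'r^'r" and a b :: "'r \<Rightarrow> 'a^'r" and c :: "'r \<Rightarrow> 'a^'k"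
  assumes S: "S = (\<Sum>\<sigma>\<in>UNIV. rank1 (a \<sigma>) (b \<sigma>) (c \<sigma>))"
    and inv: "det (slice_mix S \<gamma>0) \<noteq> 0"
  defines "Cn \<equiv> (\<lambda>\<sigma>. (1 / linform (c \<sigma>) \<gamma>0) *s c \<sigma>)"
  shows "\<forall>\<gamma>. pT S \<gamma> = pT S \<gamma>0 * (\<Prod>\<sigma>\<in>UNIV. linform (Cn \<sigma>) \<gamma>)"
    and "\<forall>\<sigma>. \<exists>w. norm w = 1 \<and> (\<forall>l. slice S l *v w = (Cn \<sigma> $ l) *s (slice_mix S \<gamma>0 *v w))"
proof -
  define Am where "Am = (\<chi> i \<sigma>. a \<sigma> $ i)"
  define Bt where "Bt = (\<chi> \<sigma> j. b \<sigma> $ j)"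
  define d where "d \<sigma> = linform (c \<sigma>) \<gamma>0" for \<sigma>
  have detR: "det (slice_mix S \<gamma>) = (\<Prod>\<sigma>\<in>UNIV. linform (c \<sigma>) \<gamma>) * det Am * det Bt" for \<gamma>
    using det_repr[OF S] unfolding Am_def Bt_def by simp
  have nz: "(\<Prod>\<sigma>\<in>UNIV. d \<sigma>) \<noteq> 0" "det Am \<noteq> 0" "det Bt \<noteq> 0"
    using inv detR[of \<gamma>0] unfolding d_def by auto
  have d0: "d \<sigma> \<noteq> 0" for \<sigma> using nz(1) by simp
  have lin: "linform (c \<sigma>) \<gamma> = d \<sigma> * linform (Cn \<sigma>) \<gamma>" for \<sigma> \<gamma>
    unfolding Cn_def linform_smult d_def[symmetric] using d0[of \<sigma>] by simp
  show "\<forall>\<gamma>. pT S \<gamma> = pT S \<gamma>0 * (\<Prod>\<sigma>\<in>UNIV. linform (Cn \<sigma>) \<gamma>)"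
  proof
    fix \<gamma>
    have "pT S \<gamma> = (\<Prod>\<sigma>\<in>UNIV. d \<sigma> * linform (Cn \<sigma>) \<gamma>) * det Am * det Bt"
      unfolding pT_def detR lin ..
    also have "\<dots> = ((\<Prod>\<sigma>\<in>UNIV. d \<sigma>) * det Am * det Bt) * (\<Prod>\<sigma>\<in>UNIV. linform (Cn \<sigma>) \<gamma>)"
      by (simp add: prod.distrib mult_ac)
    also have "(\<Prod>\<sigma>\<in>UNIV. d \<sigma>) * det Am * det Bt = pT S \<gamma>0"
      unfolding pT_def detR d_def ..
    finally show "pT S \<gamma> = pT S \<gamma>0 * (\<Prod>\<sigma>\<in>UNIV. linform (Cn \<sigma>) \<gamma>)" .
  qed
  show "\<forall>\<sigma>. \<exists>w. norm w = 1 \<and> (\<forall>l. slice S l *v w = (Cn \<sigma> $ l) *s (slice_mix S \<gamma>0 *v w))"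
  proof
    fix \<sigma>
    obtain Bi where Bi: "Bt ** Bi = mat 1"
      using nz(3) unfolding invertible_det_nz[symmetric] invertible_def by blast
    define v where "v = Bi *v axis \<sigma> 1"
    have Bv: "Bt *v v = axis \<sigma> 1" unfolding v_def by (simp add: matrix_vector_mul_assoc Bi)
    have v0: "v \<noteq> 0" using Bv by (metis axis_eq_0_iff matrix_vector_mult_0_right zero_neq_one)
    have sv: "slice S l *v v = (\<chi> i. a \<sigma> $ i * c \<sigma> $ l)" for l
      unfolding slice_repr[OF S] matrix_vector_mul_assoc[symmetric] Bt_def[symmetric] Bv
        mulv_axis by simp
    have mv: "slice_mix S \<gamma>0 *v v = (\<chi> i. d \<sigma> * a \<sigma> $ i)"
      unfolding mix_repr[OF S] matrix_vector_mul_assoc[symmetric] Bt_def[symmetric] Bv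
        mulv_axis by (simp add: d_def)
    have ev: "slice S l *v v = (Cn \<sigma> $ l) *s (slice_mix S \<gamma>0 *v v)" for l
      unfolding sv mv Cn_def d_def[symmetric] using d0[of \<sigma>] by (simp add: vec_eq_iff)
    define w where "w = of_real (inverse (norm v)) *s v"
    have nw: "norm w = 1" unfolding w_def norm_smult_vec using v0 by (simp add: norm_inverse)
    have "slice S l *v w = (Cn \<sigma> $ l) *s (slice_mix S \<gamma>0 *v w)" for l
      unfolding w_def vector_scalar_commute ev by (simp add: vector_smult_assoc mult.commute)
    then show "\<exists>w. norm w = 1 \<and> (\<forall>l. slice S l *v w = (Cn \<sigma> $ l) *s (slice_mix S \<gamma>0 *v w))"
      using nw by blast
  qed
qed


lemma jge_scaled:
  assumes "x \<noteq> 0" "y \<noteq> 0" "\<And>l. slice T l *v x = C $ l *s y" "p \<noteq> 0"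
  shows "jge_value T (p *s C)"
proof -
  have "slice T l *v x = (p *s C) $ l *s ((1/p) *s y)" for l
    using assms(3,4) by (simp add: vector_smult_assoc)
  moreover have "(1/p) *s y \<noteq> 0" using assms(2,4) by (simp add: vec_eq_iff)
  ultimately show ?thesis unfolding jge_value_def jge_pair_def using assms(1) by blast
qed

lemma part3:
  fixes T :: "'a::real_normed_field^'k^'r^'r"
  assumes g0: "det (slice_mix T \<gamma>0) \<noteq> 0" and br: "border_rank T = CARD('r)"
  shows "\<exists>L :: nat \<Rightarrow> 'a^'k. (\<forall>\<gamma>. pT T \<gamma> = (\<Prod>s<CARD('r). linform (L s) \<gamma>))
           \<and> (\<forall>s<CARD('r). jge_value T (L s))"
proof -
  define M0 where "M0 = slice_mix T \<gamma>0"
  have "\<exists>S::nat \<Rightarrow> 'a^'k^'r^'r. (\<forall>t. tensor_rank (S t) \<le> border_rank T) \<and> S \<longlonglongrightarrow> T"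
    unfolding border_rank_def
    by (rule LeastI_ex[where P = "\<lambda>n. \<exists>S::nat \<Rightarrow> 'a^'k^'r^'r. (\<forall>t. tensor_rank (S t) \<le> n) \<and> S \<longlonglongrightarrow> T"])
       (rule exI[of _ "tensor_rank T"], rule exI[of _ "\<lambda>_. T"], simp)
  then obtain S :: "nat \<Rightarrow> 'a^'k^'r^'r" where Srk: "\<And>t. tensor_rank (S t) \<le> CARD('r)" and ST: "S \<longlonglongrightarrow> T"
    using br by auto
  have ex: "\<forall>t. \<exists>a b c. S t = (\<Sum>\<sigma>\<in>(UNIV::'r set). rank1 (a \<sigma>) (b \<sigma>) (c \<sigma>))"
    using repr_r Srk by blast
  then obtain a b c where abc: "\<And>t. S t = (\<Sum>\<sigma>\<in>(UNIV::'r set). rank1 (a t \<sigma>) (b t \<sigma>) (c t \<sigma>))"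
    by metis
  define Cn where "Cn t \<sigma> = (1 / linform (c t \<sigma>) \<gamma>0) *s c t \<sigma>" for t \<sigma>
  define Mt where "Mt t = slice_mix (S t) \<gamma>0" for t
  have MtT: "Mt \<longlonglongrightarrow> M0" unfolding Mt_def M0_def by (rule tendsto_slice_mix[OF ST])
  have detlim: "(\<lambda>t. det (Mt t)) \<longlonglongrightarrow> det M0" by (rule tendsto_det[OF MtT])
  obtain Minv where Minv: "Minv ** M0 = mat 1"
    using g0 unfolding M0_def invertible_det_nz[symmetric] invertible_left_inverse by blast
  define \<kappa> where "\<kappa> = ob Minv + 1"
  have ob0: "ob A \<ge> 0" for A :: "'a^'r^'r" unfolding ob_def by (intro sum_nonneg) auto
  have \<kappa>0: "\<kappa> > 0" using ob0[of Minv] \<kappa>_def by simp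
  have lowM0: "norm v \<le> \<kappa> * norm (M0 *v v)" for v
  proof -
    have "v = Minv *v (M0 *v v)" by (simp add: matrix_vector_mul_assoc Minv)
    then have "norm v \<le> ob Minv * norm (M0 *v v)" using norm_mulv_le[of Minv "M0 *v v"] by simp
    also have "\<dots> \<le> \<kappa> * norm (M0 *v v)" unfolding \<kappa>_def by (simp add: algebra_simps)
    finally show ?thesis .
  qed
  define \<beta> where "\<beta> l = ob (slice T l) + 1" for l
  have ev1: "eventually (\<lambda>t. det (Mt t) \<noteq> 0) sequentially"
    using tendsto_imp_eventually_ne[OF detlim] g0 M0_def by simp
  have ev2: "eventually (\<lambda>t. ob (Mt t - M0) < 1/(2*\<kappa>)) sequentially"
    using order_tendstoD(2)[OF tendsto_ob[OF MtT]] \<kappa>0 by simp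
  have ev3: "eventually (\<lambda>t. \<forall>l. ob (slice (S t) l) \<le> \<beta> l) sequentially"
  proof (rule eventually_all_finite)
    fix l
    have "(\<lambda>t. ob (slice (S t) l)) \<longlonglongrightarrow> ob (slice T l)"
      unfolding ob_def by (intro tendsto_intros tendsto_vec_nth tendsto_slice[OF ST])
    then have "eventually (\<lambda>t. ob (slice (S t) l) < \<beta> l) sequentially"
      by (rule order_tendstoD(2)) (simp add: \<beta>_def)
    then show "eventually (\<lambda>t. ob (slice (S t) l) \<le> \<beta> l) sequentially"
      by (rule eventually_mono) simp
  qed
  obtain N0 where N0: "\<And>t. t \<ge> N0 \<Longrightarrow> det (Mt t) \<noteq> 0 \<and> ob (Mt t - M0) < 1/(2*\<kappa>) \<and> (\<forall>l. ob (slice (S t) l) \<le> \<beta> l)"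
    using eventually_conj[OF ev1 eventually_conj[OF ev2 ev3]] unfolding eventually_sequentially by blast
  have fs1: "pT (S t) \<gamma> = pT (S t) \<gamma>0 * (\<Prod>\<sigma>\<in>UNIV. linform (Cn t \<sigma>) \<gamma>)" if "t \<ge> N0" for t \<gamma>
    using finite_step(1)[OF abc[of t]] N0[OF that] unfolding Mt_def Cn_def by blast
  have "\<forall>t \<sigma>. \<exists>v. t \<ge> N0 \<longrightarrow> (norm v = 1 \<and> (\<forall>l. slice (S t) l *v v = (Cn t \<sigma> $ l) *s (Mt t *v v)))"
  proof (intro allI)
    fix t \<sigma>
    show "\<exists>v. t \<ge> N0 \<longrightarrow> (norm v = 1 \<and> (\<forall>l. slice (S t) l *v v = (Cn t \<sigma> $ l) *s (Mt t *v v)))"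
    proof (cases "t \<ge> N0")
      case True
      then show ?thesis using finite_step(2)[OF abc[of t]] N0[OF True] unfolding Mt_def Cn_def by blast
    qed auto
  qed
  then obtain w where w: "\<And>t \<sigma>. t \<ge> N0 \<Longrightarrow> norm (w t \<sigma>) = 1 \<and> (\<forall>l. slice (S t) l *v w t \<sigma> = (Cn t \<sigma> $ l) *s (Mt t *v w t \<sigma>))"
    by metis
  have lowMt: "norm (Mt t *v v) \<ge> 1/(2*\<kappa>)" if "t \<ge> N0" "norm v = 1" for t v
  proof -
    have a1: "norm (M0 *v v) \<ge> 1/\<kappa>" using lowM0[of v] that(2) \<kappa>0 by (simp add: field_simps)
    have "norm ((Mt t - M0) *v v) \<le> ob (Mt t - M0) * norm v" by (rule norm_mulv_le)
    then have a2: "norm ((Mt t - M0) *v v) < 1/(2*\<kappa>)" using N0[OF that(1)] that(2) by simp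
    have "Mt t *v v = M0 *v v + (Mt t - M0) *v v" by (simp add: matrix_vector_mult_diff_rdistrib)
    then have "norm (M0 *v v) \<le> norm (Mt t *v v) + norm ((Mt t - M0) *v v)"
      by (metis add_diff_cancel_right' norm_triangle_ineq4 add.commute diff_add_cancel norm_minus_commute norm_triangle_ineq2 order_trans)
    then show ?thesis using a1 a2 by (simp add: field_simps)
  qed
  have boundC: "norm (Cn t \<sigma> $ l) \<le> 2*\<kappa>*\<beta> l" if "t \<ge> N0" for t \<sigma> l
  proof -
    define v where "v = w t \<sigma>"
    have nv: "norm v = 1" and ev: "slice (S t) l *v v = (Cn t \<sigma> $ l) *s (Mt t *v v)"
      using w[OF that] unfolding v_def by auto
    have "norm (slice (S t) l *v v) \<le> \<beta> l"
      using norm_mulv_le[of "slice (S t) l" v] N0[OF that] nv by (metis mult.right_neutral order_trans)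
    then have "norm (Cn t \<sigma> $ l) * norm (Mt t *v v) \<le> \<beta> l" using ev by (simp add: norm_smult_vec)
    moreover have "norm (Cn t \<sigma> $ l) * (1/(2*\<kappa>)) \<le> norm (Cn t \<sigma> $ l) * norm (Mt t *v v)"
      using mult_left_mono[OF lowMt[OF that nv] norm_ge_zero[of "Cn t \<sigma> $ l"]] by simp
    ultimately have "norm (Cn t \<sigma> $ l) * (1/(2*\<kappa>)) \<le> \<beta> l" by linarith
    then show ?thesis using \<kappa>0 by (simp add: field_simps)
  qed
  define Cb where "Cb t = (if t \<ge> N0 then (\<chi> \<sigma>. Cn t \<sigma>) else 0)" for t
  define Wb where "Wb t = (if t \<ge> N0 then (\<chi> \<sigma>. w t \<sigma>) else 0)" for t
  define BC where "BC = (\<Sum>\<sigma>\<in>(UNIV::'r set). \<Sum>l\<in>(UNIV::'k set). 2*\<kappa>*\<beta> l)"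
  have \<beta>0: "\<beta> l \<ge> 0" for l using ob0 unfolding \<beta>_def ob_def by (simp add: add_nonneg_nonneg sum_nonneg)
  have BC0: "BC \<ge> 0" unfolding BC_def using \<kappa>0 \<beta>0 by (intro sum_nonneg) auto
  have bC: "norm (Cb t) \<le> BC" for t
  proof (cases "t \<ge> N0")
    case True
    have "norm (Cb t) \<le> (\<Sum>\<sigma>\<in>UNIV. norm (Cb t $ \<sigma>))" by (rule norm_le_l1_gen)
    also have "\<dots> \<le> (\<Sum>\<sigma>\<in>(UNIV::'r set). \<Sum>l\<in>UNIV. norm (Cb t $ \<sigma> $ l))" by (intro sum_mono norm_le_l1_gen)
    also have "\<dots> \<le> BC" unfolding BC_def Cb_def using True boundC by (intro sum_mono) auto
    finally show ?thesis .
  qed (simp add: Cb_def BC0)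
  have bW: "norm (Wb t) \<le> real CARD('r)" for t
  proof (cases "t \<ge> N0")
    case True
    have "norm (Wb t) \<le> (\<Sum>\<sigma>\<in>UNIV. norm (Wb t $ \<sigma>))" by (rule norm_le_l1_gen)
    also have "\<dots> = (\<Sum>\<sigma>\<in>(UNIV::'r set). 1)" unfolding Wb_def using True w by simp
    finally show ?thesis by simp
  qed (simp add: Wb_def)
  obtain r1 Cinf where r1: "strict_mono r1" "(Cb \<circ> r1) \<longlonglongrightarrow> Cinf" using BW[of Cb BC] bC by blast
  obtain r2 Winf where r2: "strict_mono r2" "((Wb \<circ> r1) \<circ> r2) \<longlonglongrightarrow> Winf"
    using BW[of "Wb \<circ> r1" "real CARD('r)"] bW unfolding o_def by blast
  define r where "r = r1 \<circ> r2"
  have r: "strict_mono r" unfolding r_def using strict_mono_o r1(1) r2(1) by blast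
  have Cr: "(\<lambda>t. Cb (r t)) \<longlonglongrightarrow> Cinf" using LIMSEQ_subseq_LIMSEQ[OF r1(2) r2(1)] unfolding r_def o_def by simp
  have Wr: "(\<lambda>t. Wb (r t)) \<longlonglongrightarrow> Winf" using r2(2) unfolding r_def o_def by simp
  have Sr: "(\<lambda>t. S (r t)) \<longlonglongrightarrow> T" using LIMSEQ_subseq_LIMSEQ[OF ST r] unfolding o_def by simp
  have Mr: "(\<lambda>t. Mt (r t)) \<longlonglongrightarrow> M0" unfolding Mt_def M0_def by (rule tendsto_slice_mix[OF Sr])
  have evr: "eventually (\<lambda>t. r t \<ge> N0) sequentially"
    unfolding eventually_sequentially using seq_suble[OF r] order_trans by blast
  have pTlim: "(\<lambda>t. pT (S (r t)) \<gamma>) \<longlonglongrightarrow> pT T \<gamma>" for \<gamma>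
    unfolding pT_def by (rule tendsto_det[OF tendsto_slice_mix[OF Sr]])
  have fact: "pT T \<gamma> = pT T \<gamma>0 * (\<Prod>\<sigma>\<in>UNIV. linform (Cinf $ \<sigma>) \<gamma>)" for \<gamma>
  proof -
    have L2: "(\<lambda>t. pT (S (r t)) \<gamma>0 * (\<Prod>\<sigma>\<in>UNIV. linform (Cb (r t) $ \<sigma>) \<gamma>)) \<longlonglongrightarrow> pT T \<gamma>0 * (\<Prod>\<sigma>\<in>UNIV. linform (Cinf $ \<sigma>) \<gamma>)"
      by (intro tendsto_mult tendsto_prod tendsto_linform tendsto_vec_nth Cr pTlim)
    have "eventually (\<lambda>t. pT (S (r t)) \<gamma>0 * (\<Prod>\<sigma>\<in>UNIV. linform (Cb (r t) $ \<sigma>) \<gamma>) = pT (S (r t)) \<gamma>) sequentially"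
      using evr
    proof (rule eventually_mono)
      fix t assume N: "N0 \<le> r t"
      have "Cb (r t) = (\<chi> \<sigma>. Cn (r t) \<sigma>)" using N by (simp add: Cb_def)
      then show "pT (S (r t)) \<gamma>0 * (\<Prod>\<sigma>\<in>UNIV. linform (Cb (r t) $ \<sigma>) \<gamma>) = pT (S (r t)) \<gamma>"
        using fs1[OF N, of \<gamma>] by simp
    qed
    from Lim_transform_eventually[OF L2 this] show ?thesis using LIMSEQ_unique pTlim by blast
  qed
  have eig: "slice T l *v (Winf $ \<sigma>) = (Cinf $ \<sigma> $ l) *s (M0 *v (Winf $ \<sigma>))" for \<sigma> l
  proof -
    have L1: "(\<lambda>t. slice (S (r t)) l *v (Wb (r t) $ \<sigma>)) \<longlonglongrightarrow> slice T l *v (Winf $ \<sigma>)"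
      by (intro tendsto_mulv tendsto_slice tendsto_vec_nth Sr Wr)
    have L2: "(\<lambda>t. (Cb (r t) $ \<sigma> $ l) *s (Mt (r t) *v (Wb (r t) $ \<sigma>))) \<longlonglongrightarrow> (Cinf $ \<sigma> $ l) *s (M0 *v (Winf $ \<sigma>))"
      by (intro tendsto_smult_vec tendsto_mulv tendsto_vec_nth Cr Mr Wr)
    have "eventually (\<lambda>t. (Cb (r t) $ \<sigma> $ l) *s (Mt (r t) *v (Wb (r t) $ \<sigma>)) = slice (S (r t)) l *v (Wb (r t) $ \<sigma>)) sequentially"
      using evr
    proof (rule eventually_mono)
      fix t assume N: "N0 \<le> r t"
      have "Cb (r t) = (\<chi> \<sigma>. Cn (r t) \<sigma>)" "Wb (r t) = (\<chi> \<sigma>. w (r t) \<sigma>)" using N by (simp_all add: Cb_def Wb_def)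
      then show "(Cb (r t) $ \<sigma> $ l) *s (Mt (r t) *v (Wb (r t) $ \<sigma>)) = slice (S (r t)) l *v (Wb (r t) $ \<sigma>)"
        using w[OF N, of \<sigma>] by simp
    qed
    from Lim_transform_eventually[OF L2 this] show ?thesis using LIMSEQ_unique L1 by blast
  qed
  have nW: "norm (Winf $ \<sigma>) = 1" for \<sigma>
  proof -
    have L1: "(\<lambda>t. norm (Wb (r t) $ \<sigma>)) \<longlonglongrightarrow> norm (Winf $ \<sigma>)"
      by (intro tendsto_norm tendsto_vec_nth Wr)
    have "eventually (\<lambda>t. 1 = norm (Wb (r t) $ \<sigma>)) sequentially"
      using evr
    proof (rule eventually_mono)
      fix t assume N: "N0 \<le> r t"
      have "Wb (r t) = (\<chi> \<sigma>. w (r t) \<sigma>)" using N by (simp add: Wb_def)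
      then show "1 = norm (Wb (r t) $ \<sigma>)" using w[OF N, of \<sigma>] by simp
    qed
    from Lim_transform_eventually[OF tendsto_const this] show ?thesis using LIMSEQ_unique L1 by metis
  qed
  define p0 where "p0 = pT T \<gamma>0"
  have p00: "p0 \<noteq> 0" using g0 unfolding p0_def pT_def .
  obtain h where h: "bij_betw h {0..<CARD('r)} (UNIV::'r set)"
    using ex_bij_betw_nat_finite[of "UNIV::'r set"] by auto
  define L where "L s = (if s = 0 then p0 *s Cinf $ h s else Cinf $ h s)" for s
  have prodL: "pT T \<gamma> = (\<Prod>s<CARD('r). linform (L s) \<gamma>)" for \<gamma>
  proof -
    have "(\<Prod>s<CARD('r). linform (L s) \<gamma>) = (\<Prod>s<CARD('r). (if s = 0 then p0 else 1) * linform (Cinf $ h s) \<gamma>)"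
      unfolding L_def by (intro prod.cong refl) (simp add: linform_smult)
    also have "\<dots> = (\<Prod>s<CARD('r). (if s = 0 then p0 else 1)) * (\<Prod>s<CARD('r). linform (Cinf $ h s) \<gamma>)"
      by (rule prod.distrib)
    also have "(\<Prod>s<CARD('r). (if s = 0 then p0 else 1)) = p0" by (simp add: prod.delta')
    also have "(\<Prod>s<CARD('r). linform (Cinf $ h s) \<gamma>) = (\<Prod>\<sigma>\<in>UNIV. linform (Cinf $ \<sigma>) \<gamma>)"
      unfolding lessThan_atLeast0 by (rule prod.reindex_bij_betw[OF h])
    finally show ?thesis using fact[of \<gamma>] p0_def by simp
  qed
  have jge: "jge_value T (L s)" if "s < CARD('r)" for s
  proof -
    define x where "x = Winf $ h s"
    have x0: "x \<noteq> 0" using nW[of "h s"] unfolding x_def by auto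
    have y0: "M0 *v x \<noteq> 0"
    proof
      assume "M0 *v x = 0"
      then have "Minv *v (M0 *v x) = 0" by simp
      then show False using x0 by (simp add: matrix_vector_mul_assoc Minv)
    qed
    have ev: "slice T l *v x = Cinf $ h s $ l *s (M0 *v x)" for l unfolding x_def by (rule eig)
    show ?thesis
    proof (cases "s = 0")
      case True
      then show ?thesis unfolding L_def using jge_scaled[OF x0 y0 ev p00] by simp
    next
      case False
      then show ?thesis unfolding L_def jge_value_def jge_pair_def using x0 y0 ev by auto
    qed
  qed
  show ?thesis using prodL jge by blast
qed


theorem proposition3p3:
  fixes T :: "'a::real_normed_field^'k^'r^'r"
  assumes smi: "slice_mix_invertible T"
  shows "(\<forall>lam::'a^'k. lam \<noteq> 0 \<longrightarrow> am T lam \<ge> gm T lam)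
    \<and> (\<forall>lam x. jge_pair T lam x \<longrightarrow>
          (\<exists>m::nat. m > 0 \<and> (\<exists>g. kpoly g \<and> g \<noteq> (\<lambda>_. 0) \<and>
              (\<forall>\<gamma>. pT T \<gamma> = linform lam \<gamma> ^ m * g \<gamma>))))
    \<and> (border_rank T = CARD('r) \<longrightarrow>
          (\<exists>L :: nat \<Rightarrow> 'a^'k.
             (\<forall>\<gamma>. pT T \<gamma> = (\<Prod>s<CARD('r). linform (L s) \<gamma>))
           \<and> (\<forall>s<CARD('r). jge_value T (L s))))"
proof -
  obtain \<gamma>0 where g0: "det (slice_mix T \<gamma>0) \<noteq> 0"
    using smi unfolding slice_mix_invertible_def invertible_det_nz by blast
  have p12: "(\<forall>lam::'a^'k. lam \<noteq> 0 \<longrightarrow> am T lam \<ge> gm T lam)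
    \<and> (\<forall>lam x. jge_pair T lam x \<longrightarrow>
          (\<exists>m::nat. m > 0 \<and> (\<exists>g. kpoly g \<and> g \<noteq> (\<lambda>_. 0) \<and>
              (\<forall>\<gamma>. pT T \<gamma> = linform lam \<gamma> ^ m * g \<gamma>))))"
    by (rule part12[OF smi])
  have p3: "border_rank T = CARD('r) \<longrightarrow>
          (\<exists>L :: nat \<Rightarrow> 'a^'k.
             (\<forall>\<gamma>. pT T \<gamma> = (\<Prod>s<CARD('r). linform (L s) \<gamma>))
           \<and> (\<forall>s<CARD('r). jge_value T (L s)))"
    by (rule impI) (rule part3[OF g0])
  show ?thesis by (rule conjI[OF conjunct1[OF p12] conjI[OF conjunct2[OF p12] p3]])
qed

end
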